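(* Let $h>0$, let $B\subset\mathbb Z^8_h$ be bounded, and let $f:\overline B\to\mathbb O$. Then $$\int_{\partial B}\mathbf n\,f\,dS=\int_B D^hf\,dV^h,\qquad \int_{\partial B}f\,\mathbf n\,dS=\int_B f D^h\,dV^h,$$ where $D^hf=\sum_{l=0}^7\mathbf e_l\,\partial_l^hf$ and $fD^h=\sum_{l=0}^7(\partial_l^hf)\,\mathbf e_l$.
   Context: $\mathbb O$ is the real octonion algebra with standard basis $\mathbf e_0=1,\mathbf e_1,\dots,\mathbf e_7$. For $h>0$, $\mathbb Z^8_h=(h\mathbb Z)^8\subset\mathbb R^8$, and $e_0,\dots,e_7$ denote the standard unit vectors of $\mathbb R^8$. For $A\subset\mathbb Z^8_h$, $\chi_A$ is the indicator function of $A$. Difference operators: $\partial_l^{+,h}f(x)=(f(x+he_l)-f(x))/h$, $\partial_l^{-,h}f(x)=(f(x)-f(x-he_l))/h$, $\partial_l^h=\frac12(\partial_l^{+,h}+\partial_l^{-,h})$. Let $N(x)=\{x,x\pm he_0,\dots,x\pm he_7\}$. For $B\subset\mathbb Z^8_h$: $\partial B=\{x\in\mathbb Z^8_h:\ N(x)\cap B\neq\emptyset,\ N(x)\cap(\mathbb Z^8_h\setminus B)\neq\emptyset\}$, $\overline B=B\cup\partial B$. Volume integral: $\int_A g\,dV^h=\sum_{x\in A}g(x)h^8$. For $x\in\partial B$ put $\Sigma(x)=\sum_{l=0}^7\big[(\partial_l^{+,h}\chi_B(x))^2+(\partial_l^{-,h}\chi_B(x))^2\big]$ (nonzero on $\partial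 B$), $s(x)=\frac{h^8}{2}\sqrt{\Sigma(x)}$, $n_l^{\pm}(x)=-2\,\partial_l^{\pm,h}\chi_B(x)/\sqrt{\Sigma(x)}$, $\int_{\partial B}g\,dS=\sum_{x\in\partial B}g(x)s(x)$, and the octonionic outward normal is $\mathbf n=\sum_{l=0}^7\frac12(n_l^++n_l^-)\mathbf e_l$. *)

theory Defs
  imports Complex_Main
begin

text \<open>Octonions are represented by their coordinate functions nat => real w.r.t.
 the standard basis e_0 = 1, e_1, ..., e_7 (only coordinates 0..7 are meaningful).
 Multiplication table: the standard Cayley table given by the Fano-plane triples
 (1,2,3),(1,4,5),(1,7,6),(2,4,6),(2,5,7),(3,4,7),(3,6,5): e_i e_j = e_k for (i,j,k)
 a cyclic rotation of a triple, e_j e_i = - e_k, e_i e_i = -1 (i > 0), e_0 = 1.\<close>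

type_synonym octonion = "nat \<Rightarrow> real"

definition fano :: "(nat \<times> nat \<times> nat) list" where
  "fano = [(1,2,3),(1,4,5),(1,7,6),(2,4,6),(2,5,7),(3,4,7),(3,6,5)]"

definition fano_rel :: "nat \<Rightarrow> nat \<Rightarrow> nat \<Rightarrow> bool" where
  "fano_rel i j k = (\<exists>(a,b,c)\<in>set fano. (i,j,k) \<in> {(a,b,c),(b,c,a),(c,a,b)})"

definition oct_coeff :: "nat \<Rightarrow> nat \<Rightarrow> nat \<Rightarrow> real" where
  "oct_coeff i j k =
    (if i = 0 then (if j = k then 1 else 0)
     else if j = 0 then (if i = k then 1 else 0)
     else if i = j then (if k = 0 then -1 else 0)
     else if fano_rel i j k then 1
     else if fano_rel j i k then -1
     else 0)"

definition oct_mult :: "octonion \<Rightarrow> octonion \<Rightarrow> octonion" (infixl "\<otimes>\<^sub>O" 70) where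
  "x \<otimes>\<^sub>O y = (\<lambda>k. if k < 8 then (\<Sum>i<8. \<Sum>j<8. oct_coeff i j k * x i * y j) else 0)"

definition oct_add :: "octonion \<Rightarrow> octonion \<Rightarrow> octonion" where
  "oct_add x y = (\<lambda>k. x k + y k)"

definition oct_scale :: "real \<Rightarrow> octonion \<Rightarrow> octonion" where
  "oct_scale c x = (\<lambda>k. c * x k)"

definition oct_zero :: octonion where "oct_zero = (\<lambda>k. 0)"

definition oct_sum :: "('a \<Rightarrow> octonion) \<Rightarrow> 'a set \<Rightarrow> octonion" where
  "oct_sum g A = (\<lambda>k. \<Sum>a\<in>A. g a k)"

definition oct_e :: "nat \<Rightarrow> octonion" where
  "oct_e l = (\<lambda>k. if k = l then 1 else 0)"

text \<open>Points of R^8 are represented as functions nat => real vanishing outside 0..7.\<close>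
type_synonym point = "nat \<Rightarrow> real"

definition lattice :: "real \<Rightarrow> point set" where
  "lattice h = {x. (\<forall>l<8. \<exists>m::int. x l = h * of_int m) \<and> (\<forall>l\<ge>8. x l = 0)}"

definition shift :: "real \<Rightarrow> point \<Rightarrow> nat \<Rightarrow> real \<Rightarrow> point" where
  "shift h x l s = (\<lambda>k. x k + (if k = l then s * h else 0))"

definition nbhd :: "real \<Rightarrow> point \<Rightarrow> point set" where
  "nbhd h x = insert x ((\<lambda>l. shift h x l 1) ` {..<8} \<union> (\<lambda>l. shift h x l (-1)) ` {..<8})"

definition chi :: "point set \<Rightarrow> point \<Rightarrow> real" where
  "chi A x = (if x \<in> A then 1 else 0)"

definition dplus :: "real \<Rightarrow> (point \<Rightarrow> real) \<Rightarrow> nat \<Rightarrow> point \<Rightarrow> real" where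
  "dplus h g l x = (g (shift h x l 1) - g x) / h"

definition dminus :: "real \<Rightarrow> (point \<Rightarrow> real) \<Rightarrow> nat \<Rightarrow> point \<Rightarrow> real" where
  "dminus h g l x = (g x - g (shift h x l (-1))) / h"

definition dcent :: "real \<Rightarrow> (point \<Rightarrow> octonion) \<Rightarrow> nat \<Rightarrow> point \<Rightarrow> octonion" where
  "dcent h f l x = (\<lambda>k. ((f (shift h x l 1) k - f x k) / h + (f x k - f (shift h x l (-1)) k) / h) / 2)"

definition dboundary :: "real \<Rightarrow> point set \<Rightarrow> point set" where
  "dboundary h B = {x \<in> lattice h. nbhd h x \<inter> B \<noteq> {} \<and> nbhd h x \<inter> (lattice h - B) \<noteq> {}}"

definition Sigma_b :: "real \<Rightarrow> point set \<Rightarrow> point \<Rightarrow> real" where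
  "Sigma_b h B x = (\<Sum>l<8. (dplus h (chi B) l x)\<^sup>2 + (dminus h (chi B) l x)\<^sup>2)"

definition surf_s :: "real \<Rightarrow> point set \<Rightarrow> point \<Rightarrow> real" where
  "surf_s h B x = h ^ 8 / 2 * sqrt (Sigma_b h B x)"

definition n_plus :: "real \<Rightarrow> point set \<Rightarrow> nat \<Rightarrow> point \<Rightarrow> real" where
  "n_plus h B l x = - 2 * dplus h (chi B) l x / sqrt (Sigma_b h B x)"

definition n_minus :: "real \<Rightarrow> point set \<Rightarrow> nat \<Rightarrow> point \<Rightarrow> real" where
  "n_minus h B l x = - 2 * dminus h (chi B) l x / sqrt (Sigma_b h B x)"

definition onormal :: "real \<Rightarrow> point set \<Rightarrow> point \<Rightarrow> octonion" where
  "onormal h B x = oct_sum (\<lambda>l. oct_scale ((n_plus h B l x + n_minus h B l x) / 2) (oct_e l)) {..<8}"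

definition surf_int :: "real \<Rightarrow> point set \<Rightarrow> (point \<Rightarrow> octonion) \<Rightarrow> octonion" where
  "surf_int h B g = oct_sum (\<lambda>x. oct_scale (surf_s h B x) (g x)) (dboundary h B)"

definition vol_int :: "real \<Rightarrow> point set \<Rightarrow> (point \<Rightarrow> octonion) \<Rightarrow> octonion" where
  "vol_int h A g = oct_sum (\<lambda>x. oct_scale (h ^ 8) (g x)) A"

definition Dleft :: "real \<Rightarrow> (point \<Rightarrow> octonion) \<Rightarrow> point \<Rightarrow> octonion" where
  "Dleft h f x = oct_sum (\<lambda>l. oct_e l \<otimes>\<^sub>O dcent h f l x) {..<8}"

definition Dright :: "real \<Rightarrow> (point \<Rightarrow> octonion) \<Rightarrow> point \<Rightarrow> octonion" where
  "Dright h f x = oct_sum (\<lambda>l. dcent h f l x \<otimes>\<^sub>O oct_e l) {..<8}"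

end

theory Submission
  imports Defs "HOL-Library.FuncSet"
begin

lemma shift_inv[simp]: "shift h (shift h x l s) l (-s) = x"
  by (rule ext) (simp add: shift_def)

lemma shift_lattice:
  assumes "x \<in> lattice h" "l < 8" "s = 1 \<or> s = -1"
  shows "shift h x l s \<in> lattice h"
  unfolding lattice_def mem_Collect_eq
proof (intro conjI allI impI)
  fix k :: nat assume k: "k < 8"
  obtain m :: int where m: "x k = h * of_int m" using assms(1) k unfolding lattice_def by blast
  show "\<exists>m::int. shift h x l s k = h * of_int m"
  proof (cases "k = l")
    case True
    show ?thesis using assms(3)
    proof
      assume "s = 1" thus ?thesis using True m by (intro exI[of _ "m+1"]) (simp add: shift_def algebra_simps)
    next
      assume "s = -1" thus ?thesis using True m by (intro exI[of _ "m-1"]) (simp add: shift_def algebra_simps)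
    qed
  next
    case False thus ?thesis using m by (simp add: shift_def)
  qed
next
  fix k :: nat assume "8 \<le> k"
  thus "shift h x l s k = 0" using assms unfolding lattice_def shift_def by auto
qed

lemma shift_in_nbhd: "l < 8 \<Longrightarrow> s = 1 \<or> s = -1 \<Longrightarrow> shift h x l s \<in> nbhd h x"
  unfolding nbhd_def by auto

lemma finite_nbhd: "finite (nbhd h x)"
  unfolding nbhd_def by auto

lemma nbhd_sym: "z \<in> nbhd h x \<Longrightarrow> x \<in> nbhd h z"
  unfolding nbhd_def
proof (elim insertE UnE imageE)
  fix l assume "z = shift h x l 1" "l \<in> {..<8}"
  then have "x = shift h z l (-1)" by simp
  thus "x \<in> insert z ((\<lambda>l. shift h z l 1) ` {..<8} \<union> (\<lambda>l. shift h z l (- 1)) ` {..<8})"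
    using \<open>l \<in> {..<8}\<close> by blast
next
  fix l assume "z = shift h x l (-1)" "l \<in> {..<8}"
  then have "x = shift h z l (-(-1))" by (metis shift_inv)
  thus "x \<in> insert z ((\<lambda>l. shift h z l 1) ` {..<8} \<union> (\<lambda>l. shift h z l (- 1)) ` {..<8})"
    using \<open>l \<in> {..<8}\<close> by auto
qed auto

lemma finite_dboundary:
  assumes "finite B" shows "finite (dboundary h B)"
proof -
  have "dboundary h B \<subseteq> (\<Union>z\<in>B. nbhd h z)"
    unfolding dboundary_def using nbhd_sym by blast
  thus ?thesis using assms finite_nbhd by (meson finite_UN_I finite_subset)
qed

lemma finite_bounded:
  assumes h: "h > 0" and B: "B \<subseteq> lattice h" and R: "\<forall>x\<in>B. \<forall>l. \<bar>x l\<bar> \<le> R"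
  shows "finite B"
proof -
  define N where "N = \<lceil>R / h\<rceil>"
  define F :: "point set" where "F = (\<lambda>g. \<lambda>l. if l < 8 then h * of_int (g l) else 0) ` (PiE {..<8::nat} (\<lambda>_. {-N..N}))"
  have "finite F" unfolding F_def by (intro finite_imageI finite_PiE) auto
  moreover have "B \<subseteq> F"
  proof
    fix x assume xB: "x \<in> B"
    define g where "g = restrict (\<lambda>l. \<lfloor>x l / h\<rfloor>) {..<8}"
    have xl: "l < 8 \<Longrightarrow> x l = h * of_int \<lfloor>x l / h\<rfloor>" for l
    proof -
      assume "l < 8"
      then obtain m :: int where "x l = h * of_int m" using B xB unfolding lattice_def by blast
      thus ?thesis using h by simp
    qed
    have "g \<in> PiE {..<8::nat} (\<lambda>_. {-N..N})"
      unfolding g_def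
    proof (rule restrict_PiE_iff[THEN iffD2], intro ballI)
      fix l :: nat assume "l \<in> {..<8}"
      have "\<bar>x l\<bar> / h \<le> R / h" using R xB h by (simp add: divide_right_mono)
      hence a: "\<bar>x l / h\<bar> \<le> R / h" using h by simp
      have "\<lfloor>x l / h\<rfloor> \<le> N"
      proof -
        have "x l / h \<le> R / h" using a by linarith
        hence "\<lfloor>x l / h\<rfloor> \<le> \<lfloor>R / h\<rfloor>" by (rule floor_mono)
        thus ?thesis by (metis N_def floor_le_ceiling order_trans)
      qed
      moreover have "- N \<le> \<lfloor>x l / h\<rfloor>"
      proof -
        have "- (R / h) \<le> x l / h" using a by linarith
        hence "\<lfloor>- (R / h)\<rfloor> \<le> \<lfloor>x l / h\<rfloor>" by (rule floor_mono)
        thus ?thesis unfolding N_def by (simp add: floor_minus)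
      qed
      ultimately show "\<lfloor>x l / h\<rfloor> \<in> {-N..N}" by simp
    qed
    moreover have "x = (\<lambda>l. if l < 8 then h * of_int (g l) else 0)"
    proof
      fix l show "x l = (if l < 8 then h * of_int (g l) else 0)"
        using xl B xB unfolding g_def lattice_def by auto
    qed
    ultimately show "x \<in> F" unfolding F_def by blast
  qed
  ultimately show ?thesis by (rule finite_subset[rotated])
qed

lemma shift_in_S:
  assumes B: "B \<subseteq> lattice h" and x: "x \<in> B" and l: "l < 8" and s: "s = 1 \<or> s = -1"
  shows "shift h x l s \<in> B \<union> dboundary h B"
proof -
  let ?y = "shift h x l s"
  have yl: "?y \<in> lattice h" using shift_lattice B x l s by blast
  have "x = shift h ?y l (-s)" by simp
  moreover have "-s = 1 \<or> -s = -1" using s by auto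
  ultimately have "x \<in> nbhd h ?y" using shift_in_nbhd l by metis
  moreover have "?y \<in> nbhd h ?y" unfolding nbhd_def by simp
  ultimately show ?thesis using yl x unfolding dboundary_def by blast
qed

lemma reindex_shift:
  assumes fin: "finite B" and B: "B \<subseteq> lattice h" and l: "l < 8" and s: "s = 1 \<or> s = -1"
  shows "(\<Sum>x\<in>B. g (shift h x l s)) = (\<Sum>y\<in>B \<union> dboundary h B. chi B (shift h y l (-s)) * g y)"
proof -
  have inj: "inj_on (\<lambda>x. shift h x l s) B"
    by (metis (mono_tags, lifting) inj_onI shift_inv)
  have "(\<Sum>x\<in>B. g (shift h x l s)) = (\<Sum>y\<in>(\<lambda>x. shift h x l s) ` B. g y)"
    using sum.reindex[OF inj, of g] by simp
  also have "\<dots> = (\<Sum>y\<in>B \<union> dboundary h B. chi B (shift h y l (-s)) * g y)"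
  proof (rule sum.mono_neutral_cong_left)
    show "finite (B \<union> dboundary h B)" using fin finite_dboundary by blast
    show "(\<lambda>x. shift h x l s) ` B \<subseteq> B \<union> dboundary h B" using shift_in_S[OF B _ l s] by blast
    show "\<forall>i\<in>B \<union> dboundary h B - (\<lambda>x. shift h x l s) ` B. chi B (shift h i l (- s)) * g i = 0"
    proof
      fix y assume "y \<in> B \<union> dboundary h B - (\<lambda>x. shift h x l s) ` B"
      hence "shift h y l (-s) \<notin> B"
        by (metis (no_types, lifting) DiffD2 image_eqI minus_minus shift_inv)
      thus "chi B (shift h y l (- s)) * g y = 0" by (simp add: chi_def)
    qed
    show "\<And>y. y \<in> (\<lambda>x. shift h x l s) ` B \<Longrightarrow> g y = chi B (shift h y l (- s)) * g y"
      by (auto simp: chi_def)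
  qed
  finally show ?thesis .
qed

definition cdiff :: "real \<Rightarrow> point set \<Rightarrow> nat \<Rightarrow> point \<Rightarrow> real" where
  "cdiff h B l x = chi B (shift h x l (-1)) - chi B (shift h x l 1)"

lemma cdiff_zero:
  assumes B: "B \<subseteq> lattice h" and y: "y \<in> B \<union> dboundary h B - dboundary h B" and l: "l < 8"
  shows "cdiff h B l y = 0"
proof -
  have yB: "y \<in> B" and yl: "y \<in> lattice h" using y B by auto
  have "y \<in> nbhd h y \<inter> B" using yB unfolding nbhd_def by simp
  hence e: "nbhd h y \<inter> (lattice h - B) = {}" using y yl unfolding dboundary_def by blast
  have "shift h y l 1 \<in> B" using e shift_in_nbhd[OF l] shift_lattice[OF yl l] by blast
  moreover have "shift h y l (-1) \<in> B" using e shift_in_nbhd[OF l] shift_lattice[OF yl l] by blast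
  ultimately show ?thesis by (simp add: cdiff_def chi_def)
qed

lemma snorm:
  assumes h: "h > 0" and i: "i < 8"
  shows "surf_s h B x * ((n_plus h B i x + n_minus h B i x) / 2) = h ^ 7 / 2 * cdiff h B i x"
proof -
  have key: "dplus h (chi B) i x + dminus h (chi B) i x = - cdiff h B i x / h"
    unfolding dplus_def dminus_def cdiff_def using h by (simp add: field_simps)
  show ?thesis
  proof (cases "Sigma_b h B x = 0")
    case True
    have "\<forall>l\<in>{..<8}. (dplus h (chi B) l x)\<^sup>2 + (dminus h (chi B) l x)\<^sup>2 = 0"
      using True unfolding Sigma_b_def by (subst sum_nonneg_eq_0_iff[symmetric]) auto
    hence "(dplus h (chi B) i x)\<^sup>2 + (dminus h (chi B) i x)\<^sup>2 = 0" using i by auto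
    hence "dplus h (chi B) i x = 0" "dminus h (chi B) i x = 0"
      by (smt (verit) zero_le_power2 zero_eq_power2)+
    hence "cdiff h B i x = 0" using key h by simp
    thus ?thesis using True by (simp add: surf_s_def)
  next
    case False
    have pos: "sqrt (Sigma_b h B x) \<noteq> 0" using False by simp
    have "surf_s h B x * ((n_plus h B i x + n_minus h B i x) / 2)
       = -(h ^ 8) / 2 * (dplus h (chi B) i x + dminus h (chi B) i x)"
      unfolding surf_s_def n_plus_def n_minus_def using pos by (simp add: field_simps)
    also have "\<dots> = h ^ 7 / 2 * cdiff h B i x" unfolding key using h
      by (simp add: field_simps power_eq_if)
    finally show ?thesis .
  qed
qed

lemma core:
  fixes T :: "nat \<Rightarrow> point \<Rightarrow> real"
  assumes h: "h > 0" and fin: "finite B" and B: "B \<subseteq> lattice h"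
  shows "(\<Sum>x\<in>dboundary h B. \<Sum>l<8. h ^ 7 / 2 * cdiff h B l x * T l x)
       = (\<Sum>x\<in>B. h ^ 8 * (\<Sum>l<8. (T l (shift h x l 1) - T l (shift h x l (-1))) / (2 * h)))"
proof -
  let ?S = "B \<union> dboundary h B"
  have finS: "finite ?S" using fin finite_dboundary by blast
  have "(\<Sum>x\<in>B. h ^ 8 * (\<Sum>l<8. (T l (shift h x l 1) - T l (shift h x l (-1))) / (2 * h)))
      = (\<Sum>x\<in>B. \<Sum>l<8. h ^ 7 / 2 * (T l (shift h x l 1) - T l (shift h x l (-1))))"
    unfolding sum_distrib_left
  proof (intro sum.cong refl)
    fix x l
    show "h ^ 8 * ((T l (shift h x l 1) - T l (shift h x l (-1))) / (2 * h))
        = h ^ 7 / 2 * (T l (shift h x l 1) - T l (shift h x l (-1)))"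
      using h by (simp add: field_simps power_eq_if)
  qed
  also have "\<dots> = (\<Sum>l<8. h ^ 7 / 2 * ((\<Sum>x\<in>B. T l (shift h x l 1)) - (\<Sum>x\<in>B. T l (shift h x l (-1)))))"
    by (subst sum.swap) (simp add: sum_distrib_left sum_subtractf right_diff_distrib)
  also have "\<dots> = (\<Sum>l<8. h ^ 7 / 2 * (\<Sum>y\<in>?S. cdiff h B l y * T l y))"
  proof (intro sum.cong refl)
    fix l :: nat assume "l \<in> {..<8}"
    hence l: "l < 8" by simp
    have a: "(\<Sum>x\<in>B. T l (shift h x l 1)) = (\<Sum>y\<in>?S. chi B (shift h y l (-1)) * T l y)"
      using reindex_shift[OF fin B l, of 1] by simp
    have b: "(\<Sum>x\<in>B. T l (shift h x l (-1))) = (\<Sum>y\<in>?S. chi B (shift h y l 1) * T l y)"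
      using reindex_shift[OF fin B l, of "-1"] by simp
    show "h ^ 7 / 2 * ((\<Sum>x\<in>B. T l (shift h x l 1)) - (\<Sum>x\<in>B. T l (shift h x l (-1))))
        = h ^ 7 / 2 * (\<Sum>y\<in>?S. cdiff h B l y * T l y)"
      unfolding a b cdiff_def by (simp add: sum_subtractf left_diff_distrib)
  qed
  also have "\<dots> = (\<Sum>y\<in>?S. \<Sum>l<8. h ^ 7 / 2 * cdiff h B l y * T l y)"
    by (subst sum.swap) (simp add: sum_distrib_left mult.assoc)
  also have "\<dots> = (\<Sum>x\<in>dboundary h B. \<Sum>l<8. h ^ 7 / 2 * cdiff h B l x * T l x)"
  proof (rule sum.mono_neutral_right[OF finS])
    show "dboundary h B \<subseteq> ?S" by blast
    show "\<forall>i\<in>?S - dboundary h B. (\<Sum>l<8. h ^ 7 / 2 * cdiff h B l i * T l i) = 0"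
    proof
      fix y assume "y \<in> ?S - dboundary h B"
      thus "(\<Sum>l<8. h ^ 7 / 2 * cdiff h B l y * T l y) = 0"
        using cdiff_zero[OF B] by (intro sum.neutral) auto
    qed
  qed
  finally show ?thesis by simp
qed

lemma onormal_i: "i < 8 \<Longrightarrow> onormal h B x i = (n_plus h B i x + n_minus h B i x) / 2"
proof -
  assume i: "i < 8"
  have "onormal h B x i = (\<Sum>a<8. if i = a then (n_plus h B a x + n_minus h B a x) / 2 else 0)"
    unfolding onormal_def oct_sum_def oct_scale_def oct_e_def by (intro sum.cong refl) auto
  also have "\<dots> = (n_plus h B i x + n_minus h B i x) / 2" using i by (simp add: sum.delta)
  finally show ?thesis .
qed

lemma snorm2: assumes "h > 0" "i < 8" shows "surf_s h B x * onormal h B x i = h ^ 7 / 2 * cdiff h B i x"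
  unfolding onormal_i[OF assms(2)] by (rule snorm[OF assms])

lemma mult_e_left: "l < 8 \<Longrightarrow> (oct_e l \<otimes>\<^sub>O y) k = (if k < 8 then (\<Sum>j<8. oct_coeff l j k * y j) else 0)"
proof -
  assume l: "l < 8"
  have "(\<Sum>i<8. \<Sum>j<8. oct_coeff i j k * oct_e l i * y j) = (\<Sum>i<8. if i = l then (\<Sum>j<8. oct_coeff l j k * y j) else 0)"
    by (intro sum.cong refl) (auto simp: oct_e_def)
  also have "\<dots> = (\<Sum>j<8. oct_coeff l j k * y j)" using l by (simp add: sum.delta')
  finally show ?thesis unfolding oct_mult_def by simp
qed

lemma mult_e_right: "l < 8 \<Longrightarrow> (y \<otimes>\<^sub>O oct_e l) k = (if k < 8 then (\<Sum>i<8. oct_coeff i l k * y i) else 0)"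
proof -
  assume l: "l < 8"
  have "(\<Sum>i<8. \<Sum>j<8. oct_coeff i j k * y i * oct_e l j) = (\<Sum>i<8. oct_coeff i l k * y i)"
  proof (intro sum.cong refl)
    fix i
    have "(\<Sum>j<8. oct_coeff i j k * y i * oct_e l j) = (\<Sum>j<8. if j = l then oct_coeff i l k * y i else 0)"
      by (intro sum.cong refl) (auto simp: oct_e_def)
    also have "\<dots> = oct_coeff i l k * y i" using l by (simp add: sum.delta')
    finally show "(\<Sum>j<8. oct_coeff i j k * y i * oct_e l j) = oct_coeff i l k * y i" .
  qed
  thus ?thesis unfolding oct_mult_def by simp
qed

lemma dcent_sum:
  assumes h: "h > 0"
  shows "(\<Sum>j<8. c j * dcent h f l x j)
       = ((\<Sum>j<8. c j * f (shift h x l 1) j) - (\<Sum>j<8. c j * f (shift h x l (-1)) j)) / (2 * h)"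
proof -
  have "(\<Sum>j<8. c j * dcent h f l x j) = (\<Sum>j<8. (c j * f (shift h x l 1) j - c j * f (shift h x l (-1)) j) / (2 * h))"
    unfolding dcent_def using h by (intro sum.cong refl) (simp add: field_simps)
  thus ?thesis by (simp add: sum_divide_distrib[symmetric] sum_subtractf)
qed

lemma left_surf:
  assumes h: "h > 0" and k: "k < 8"
  shows "surf_s h B x * (onormal h B x \<otimes>\<^sub>O f x) k
       = (\<Sum>l<8. h ^ 7 / 2 * cdiff h B l x * (\<Sum>j<8. oct_coeff l j k * f x j))"
proof -
  have "surf_s h B x * (onormal h B x \<otimes>\<^sub>O f x) k
      = (\<Sum>i<8. (surf_s h B x * onormal h B x i) * (\<Sum>j<8. oct_coeff i j k * f x j))"
    using k by (simp add: oct_mult_def sum_distrib_left mult_ac)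
  also have "\<dots> = (\<Sum>l<8. h ^ 7 / 2 * cdiff h B l x * (\<Sum>j<8. oct_coeff l j k * f x j))"
    by (intro sum.cong refl) (simp add: snorm2[OF h])
  finally show ?thesis .
qed

lemma right_surf:
  assumes h: "h > 0" and k: "k < 8"
  shows "surf_s h B x * (f x \<otimes>\<^sub>O onormal h B x) k
       = (\<Sum>l<8. h ^ 7 / 2 * cdiff h B l x * (\<Sum>i<8. oct_coeff i l k * f x i))"
proof -
  have "surf_s h B x * (f x \<otimes>\<^sub>O onormal h B x) k
      = (\<Sum>j<8. (surf_s h B x * onormal h B x j) * (\<Sum>i<8. oct_coeff i j k * f x i))"
  proof -
    have "(f x \<otimes>\<^sub>O onormal h B x) k = (\<Sum>i<8. \<Sum>j<8. oct_coeff i j k * f x i * onormal h B x j)"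
      using k by (simp add: oct_mult_def)
    also have "\<dots> = (\<Sum>j<8. \<Sum>i<8. oct_coeff i j k * f x i * onormal h B x j)"
      by (rule sum.swap)
    finally show ?thesis by (simp add: sum_distrib_left sum_distrib_right mult_ac)
  qed
  also have "\<dots> = (\<Sum>l<8. h ^ 7 / 2 * cdiff h B l x * (\<Sum>i<8. oct_coeff i l k * f x i))"
    by (intro sum.cong refl) (simp add: snorm2[OF h])
  finally show ?thesis .
qed

lemma left_vol:
  assumes h: "h > 0" and k: "k < 8"
  shows "Dleft h f x k = (\<Sum>l<8. ((\<Sum>j<8. oct_coeff l j k * f (shift h x l 1) j)
                                   - (\<Sum>j<8. oct_coeff l j k * f (shift h x l (-1)) j)) / (2 * h))"
  unfolding Dleft_def oct_sum_def using k
  by (intro sum.cong refl) (simp add: mult_e_left dcent_sum[OF h])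

lemma right_vol:
  assumes h: "h > 0" and k: "k < 8"
  shows "Dright h f x k = (\<Sum>l<8. ((\<Sum>j<8. oct_coeff j l k * f (shift h x l 1) j)
                                   - (\<Sum>j<8. oct_coeff j l k * f (shift h x l (-1)) j)) / (2 * h))"
  unfolding Dright_def oct_sum_def using k
  by (intro sum.cong refl) (simp add: mult_e_right dcent_sum[OF h])

theorem mainTheorem3:
  fixes h :: real and B :: "point set" and f :: "point \<Rightarrow> octonion"
  assumes "h > 0"
    and "B \<subseteq> lattice h"
    and "\<exists>R. \<forall>x\<in>B. \<forall>l. \<bar>x l\<bar> \<le> R"
  shows "surf_int h B (\<lambda>x. onormal h B x \<otimes>\<^sub>O f x) = vol_int h B (Dleft h f) \<and>
         surf_int h B (\<lambda>x. f x \<otimes>\<^sub>O onormal h B x) = vol_int h B (Dright h f)"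
proof -
  have h: "h > 0" and B: "B \<subseteq> lattice h" using assms by auto
  obtain R where "\<forall>x\<in>B. \<forall>l. \<bar>x l\<bar> \<le> R" using assms(3) by blast
  hence fin: "finite B" using finite_bounded[OF h B] by blast
  show ?thesis
  proof
    show "surf_int h B (\<lambda>x. onormal h B x \<otimes>\<^sub>O f x) = vol_int h B (Dleft h f)"
    proof
      fix k :: nat
      show "surf_int h B (\<lambda>x. onormal h B x \<otimes>\<^sub>O f x) k = vol_int h B (Dleft h f) k"
      proof (cases "k < 8")
        case True
        show ?thesis
          unfolding surf_int_def vol_int_def oct_sum_def oct_scale_def
          using core[OF h fin B, of "\<lambda>l y. \<Sum>j<8. oct_coeff l j k * f y j"]
          by (simp add: left_surf[OF h True] left_vol[OF h True])
      next
        case False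
        thus ?thesis
          by (simp add: surf_int_def vol_int_def oct_sum_def oct_scale_def oct_mult_def Dleft_def)
      qed
    qed
  next
    show "surf_int h B (\<lambda>x. f x \<otimes>\<^sub>O onormal h B x) = vol_int h B (Dright h f)"
    proof
      fix k :: nat
      show "surf_int h B (\<lambda>x. f x \<otimes>\<^sub>O onormal h B x) k = vol_int h B (Dright h f) k"
      proof (cases "k < 8")
        case True
        show ?thesis
          unfolding surf_int_def vol_int_def oct_sum_def oct_scale_def
          using core[OF h fin B, of "\<lambda>l y. \<Sum>j<8. oct_coeff j l k * f y j"]
          by (simp add: right_surf[OF h True] right_vol[OF h True])
      next
        case False
        thus ?thesis
          by (simp add: surf_int_def vol_int_def oct_sum_def oct_scale_def oct_mult_def Dright_def)
      qed
    qed
  qed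
qed

end
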